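(* For every positive integer $m$ and every orthogonality graph $G$ in $\mathbb{S}^{d-1}$, the blow-up graph $G^{m}$ is an orthogonality graph in $\mathbb{S}^{2d-1}$.
   Context: $\mathbb{S}^{d-1}\subseteq\mathbb{R}^d$ is the set of unit vectors. A graph $G$ is an orthogonality graph in $S\subseteq\mathbb{R}^d$ if there is an injective map from $V(G)$ to $S$ such that adjacent vertices are mapped to orthogonal vectors (the representation need not be faithful). For a graph $G$ and positive integer $m$, the blow-up $G^m$ is obtained from $G$ by replacing each vertex by an independent set of size $m$ and each edge by a complete bipartite graph $K_{m,m}$ between the two corresponding independent sets. *)

theory Defs
  imports "HOL-Analysis.Analysis"
begin

definition simple_graph :: "'a set \<Rightarrow> ('a \<Rightarrow> 'a \<Rightarrow> bool) \<Rightarrow> bool" where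
  "simple_graph V E \<longleftrightarrow>
     (\<forall>u v. E u v \<longrightarrow> u \<in> V \<and> v \<in> V) \<and>
     (\<forall>u v. E u v \<longrightarrow> E v u) \<and>
     (\<forall>u. \<not> E u u)"

definition orth_graph :: "'a set \<Rightarrow> ('a \<Rightarrow> 'a \<Rightarrow> bool) \<Rightarrow> 'b::real_inner set \<Rightarrow> bool" where
  "orth_graph V E S \<longleftrightarrow>
     (\<exists>f. inj_on f V \<and> f ` V \<subseteq> S \<and> (\<forall>u\<in>V. \<forall>v\<in>V. E u v \<longrightarrow> inner (f u) (f v) = 0))"

definition blowup_vertices :: "'a set \<Rightarrow> nat \<Rightarrow> ('a \<times> nat) set" where
  "blowup_vertices V m = V \<times> {..<m}"

definition blowup_edges :: "('a \<Rightarrow> 'a \<Rightarrow> bool) \<Rightarrow> ('a \<times> nat) \<Rightarrow> ('a \<times> nat) \<Rightarrow> bool" where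
  "blowup_edges E x y \<longleftrightarrow> E (fst x) (fst y)"

end

theory Submission
  imports Defs
begin

lemma sum_UNIV_plus:
  fixes h :: "('x::finite + 'y::finite) \<Rightarrow> real"
  shows "sum h UNIV = sum (\<lambda>j. h (Inl j)) UNIV + sum (\<lambda>j. h (Inr j)) UNIV"
proof -
  have U: "(UNIV :: ('x + 'y) set) = range Inl \<union> range Inr"
  proof (rule set_eqI)
    fix x :: "'x + 'y" show "x \<in> UNIV \<longleftrightarrow> x \<in> range Inl \<union> range Inr" by (cases x) auto
  qed
  have "sum h UNIV = sum h (range Inl) + sum h (range Inr)"
    unfolding U by (rule sum.union_disjoint) auto
  also have "sum h (range Inl) = sum (\<lambda>j. h (Inl j)) UNIV"
    by (subst sum.reindex) (auto simp: inj_on_def)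
  also have "sum h (range Inr) = sum (\<lambda>j. h (Inr j)) UNIV"
    by (subst sum.reindex) (auto simp: inj_on_def)
  finally show ?thesis .
qed

definition lift :: "real \<Rightarrow> real ^ 'd \<Rightarrow> real ^ ('d + 'd)" where
  "lift t x = (\<chi> k. case k of Inl j \<Rightarrow> cos t * x $ j | Inr j \<Rightarrow> sin t * x $ j)"

lemma inner_lift: "inner (lift a x) (lift b y) = cos (a - b) * inner x y"
proof -
  have "inner (lift a x) (lift b y) =
     (\<Sum>j\<in>UNIV. cos a * x $ j * (cos b * y $ j)) + (\<Sum>j\<in>UNIV. sin a * x $ j * (sin b * y $ j))"
    unfolding inner_vec_def lift_def by (simp add: sum_UNIV_plus)
  also have "\<dots> = (cos a * cos b + sin a * sin b) * (\<Sum>j\<in>UNIV. x $ j * y $ j)"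
    by (simp add: sum_distrib_left algebra_simps sum.distrib)
  also have "\<dots> = cos (a - b) * inner x y"
    by (simp add: cos_diff inner_vec_def)
  finally show ?thesis .
qed

theorem mainTheorem6:
  fixes V :: "'a set" and E :: "'a \<Rightarrow> 'a \<Rightarrow> bool" and m :: nat
  assumes "simple_graph V E"
    and "0 < m"
    and "orth_graph V E (sphere (0 :: real ^ 'd) 1)"
  shows "orth_graph (blowup_vertices V m) (blowup_edges E) (sphere (0 :: real ^ ('d + 'd)) 1)"
proof -
  obtain f where inj: "inj_on f V" and img: "f ` V \<subseteq> sphere (0::real^'d) 1"
    and orth: "\<forall>u\<in>V. \<forall>v\<in>V. E u v \<longrightarrow> inner (f u) (f v) = 0"
    using assms(3) unfolding orth_graph_def by blast
  define t :: "nat \<Rightarrow> real" where "t i = real i / real m" for i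
  define g where "g p = lift (t (snd p)) (f (fst p))" for p
  have nf: "u \<in> V \<Longrightarrow> inner (f u) (f u) = 1" for u
    using img by (auto simp: dot_square_norm)
  have tr: "i < m \<Longrightarrow> 0 \<le> t i \<and> t i < 1" for i
    using assms(2) by (auto simp: t_def divide_simps)
  have "inj_on g (blowup_vertices V m)"
  proof (rule inj_onI)
    fix p q assume p: "p \<in> blowup_vertices V m" and q: "q \<in> blowup_vertices V m" and e: "g p = g q"
    obtain u i where pp: "p = (u,i)" "u \<in> V" "i < m" using p by (auto simp: blowup_vertices_def)
    obtain v j where qq: "q = (v,j)" "v \<in> V" "j < m" using q by (auto simp: blowup_vertices_def)
    let ?a = "t i" and ?b = "t j"
    have "1 = inner (g p) (g p)" using nf[OF pp(2)] by (simp add: g_def pp inner_lift)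
    also have "\<dots> = inner (g p) (g q)" using e by simp
    also have "\<dots> = cos (?a - ?b) * inner (f u) (f v)" by (simp add: g_def pp qq inner_lift)
    finally have c1: "cos (?a - ?b) * inner (f u) (f v) = 1" by simp
    have nu: "norm (f u) = 1" "norm (f v) = 1" using img pp qq by auto
    have ib: "\<bar>inner (f u) (f v)\<bar> \<le> 1" using Cauchy_Schwarz_ineq2[of "f u" "f v"] nu by simp
    have cb: "\<bar>cos (?a - ?b)\<bar> \<le> 1" by (rule abs_cos_le_one)
    have "\<bar>cos (?a - ?b)\<bar> * \<bar>inner (f u) (f v)\<bar> = 1" using c1 by (metis abs_mult abs_one)
    moreover have "\<bar>cos (?a - ?b)\<bar> * \<bar>inner (f u) (f v)\<bar> \<le> \<bar>cos (?a - ?b)\<bar> * 1"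
      by (rule mult_left_mono[OF ib]) simp
    ultimately have cabs: "\<bar>cos (?a - ?b)\<bar> = 1" using cb by linarith
    have d: "\<bar>?a - ?b\<bar> < 1" using tr[OF pp(3)] tr[OF qq(3)] by linarith
    have "cos \<bar>?a - ?b\<bar> > 0"
      by (rule cos_gt_zero_pi) (use d pi_gt3 in linarith)+
    hence "cos \<bar>?a - ?b\<bar> = 1" using cabs cos_minus[of "?a - ?b"] by (simp add: abs_if split: if_splits)
    hence ceq: "cos \<bar>?a - ?b\<bar> = cos 0" by simp
    have "\<bar>?a - ?b\<bar> \<le> pi" using d pi_gt3 by linarith
    hence "\<bar>?a - ?b\<bar> = 0"
      using cos_inj_pi[OF abs_ge_zero _ order_refl pi_ge_zero ceq] by blast
    hence ab: "?a = ?b" by simp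
    hence ij: "i = j" using assms(2) by (simp add: t_def)
    have "inner (f u) (f v) = 1" using c1 ab by simp
    hence "norm (f u - f v)^2 = 0"
      using nf[OF pp(2)] nf[OF qq(2)] by (simp add: power2_norm_eq_inner inner_diff inner_commute)
    hence "f u = f v" by simp
    hence "u = v" using inj pp qq by (auto dest: inj_onD)
    thus "p = q" using pp qq ij by simp
  qed
  moreover have "g ` blowup_vertices V m \<subseteq> sphere 0 1"
  proof
    fix y assume "y \<in> g ` blowup_vertices V m"
    then obtain u i where y: "y = g (u,i)" "u \<in> V" by (auto simp: blowup_vertices_def)
    have "inner y y = 1" using nf[OF y(2)] by (simp add: y g_def inner_lift)
    thus "y \<in> sphere 0 1" by (simp add: norm_eq_sqrt_inner)
  qed
  moreover have "\<forall>p\<in>blowup_vertices V m. \<forall>q\<in>blowup_vertices V m.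
      blowup_edges E p q \<longrightarrow> inner (g p) (g q) = 0"
    using orth by (auto simp: blowup_vertices_def blowup_edges_def g_def inner_lift)
  ultimately show ?thesis unfolding orth_graph_def by blast
qed

end
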